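(* Suppose $\alpha\neq1$. Then there exists $C\in(0,\infty)$ such that for all $u\in\mathcal F$, $$\mathcal E(u,u)\ge C\int_{\mathbb R^d_+}\frac{u(x)^2}{x_d^{\alpha}}\,dx.$$
   Context: Let $d\ge 1$, $\alpha\in(0,2)$. Write $x=(\widetilde x,x_d)$, $\mathbb R^d_+=\{x:x_d>0\}$. Fix $\beta_1,\beta_2,\beta_3,\beta_4\ge0$ with $\beta_1>0$ if $\beta_3>0$ and $\beta_2>0$ if $\beta_4>0$, and set $$\widetilde B(x,y)=\Big(\tfrac{x_d\wedge y_d}{|x-y|}\wedge1\Big)^{\beta_1}\Big(\tfrac{x_d\vee y_d}{|x-y|}\wedge1\Big)^{\beta_2}\Big[\log\Big(1+\tfrac{(x_d\vee y_d)\wedge|x-y|}{x_d\wedge y_d\wedge|x-y|}\Big)\Big]^{\beta_3}\Big[\log\Big(1+\tfrac{|x-y|}{(x_d\vee y_d)\wedge|x-y|}\Big)\Big]^{\beta_4}.$$ Let $\mathcal B:\mathbb R^d_+\times\mathbb R^d_+\to[0,\infty)$ satisfy: (A1) symmetry; (A2) if $\alpha\ge1$, there exist $\theta>\alpha-1$, $C>0$ with $|\mathcal B(x,x)-\mathcal B(x,y)|\le C(|x-y|/(x_d\wedge y_d))^{\theta}$; (A3) $C^{-1}\widetilde B\le\mathcal B\le C\widetilde B$ for some $C\ge1$; (A4) $\mathcal B(ax,ay)=\mathcal B(x,y)$ for $a>0$ and, if $d\ge2$, $\mathcal B(x+(\widetilde z,0),y+(\widetilde z,0))=\mathcal B(x,y)$;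 and $\mathcal B(x,x)=1$. Let $J(x,y)=|x-y|^{-d-\alpha}\mathcal B(x,y)$, $\mathcal E(u,v)=\frac12\int_{\mathbb R^d_+}\int_{\mathbb R^d_+}(u(x)-u(y))(v(x)-v(y))J(x,y)\,dy\,dx$, and $\mathcal F$ the closure of $C_c^\infty(\mathbb R^d_+)$ under $\mathcal E_1=\mathcal E+(\cdot,\cdot)_{L^2(\mathbb R^d_+,dx)}$. *)

theory Defs
  imports "HOL-Analysis.Analysis"
begin

text \<open>Points of R^d are vectors \<open>real ^ 'n\<close> with d = CARD('n); a distinguished
  coordinate index \<open>k :: 'n\<close> plays the role of the last coordinate x_d.\<close>

definition halfspace :: "'n::finite \<Rightarrow> (real ^ 'n) set" where
  "halfspace k = {x. x $ k > 0}"

fun Ck :: "nat \<Rightarrow> (real ^ 'n::finite \<Rightarrow> real) \<Rightarrow> bool" where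
  "Ck 0 f = continuous_on UNIV f"
| "Ck (Suc m) f = (continuous_on UNIV f \<and>
     (\<forall>i. \<exists>g. (\<forall>x. ((\<lambda>t. f (x + t *\<^sub>R axis i 1)) has_real_derivative g x) (at 0)) \<and> Ck m g))"

definition smooth :: "(real ^ 'n::finite \<Rightarrow> real) \<Rightarrow> bool" where
  "smooth f = (\<forall>m. Ck m f)"

definition Cc_inf_half :: "'n::finite \<Rightarrow> (real ^ 'n \<Rightarrow> real) set" where
  "Cc_inf_half k = {f. smooth f \<and> compact (closure {x. f x \<noteq> 0}) \<and>
                       closure {x. f x \<noteq> 0} \<subseteq> halfspace k}"

definition Btilde :: "'n::finite \<Rightarrow> real \<Rightarrow> real \<Rightarrow> real \<Rightarrow> real \<Rightarrow> real ^ 'n \<Rightarrow> real ^ 'n \<Rightarrow> real" where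
  "Btilde k b1 b2 b3 b4 x y =
     (let r = dist x y; m = min (x $ k) (y $ k); M = max (x $ k) (y $ k) in
      (min (m / r) 1) powr b1 * (min (M / r) 1) powr b2 *
      (ln (1 + min M r / min m r)) powr b3 * (ln (1 + r / min M r)) powr b4)"

definition Jk :: "real \<Rightarrow> (real ^ 'n::finite \<Rightarrow> real ^ 'n \<Rightarrow> real) \<Rightarrow> real ^ 'n \<Rightarrow> real ^ 'n \<Rightarrow> real" where
  "Jk \<alpha> B x y = dist x y powr (- real CARD('n) - \<alpha>) * B x y"

text \<open>Quadratic form \<open>\<E>(u,u)\<close> (nonnegative integrand, so stated as an extended nonnegative integral).\<close>
definition Eform :: "'n::finite \<Rightarrow> real \<Rightarrow> (real ^ 'n \<Rightarrow> real ^ 'n \<Rightarrow> real) \<Rightarrow> (real ^ 'n \<Rightarrow> real) \<Rightarrow> ennreal" where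
  "Eform k \<alpha> B u = ennreal (1/2) *
     (\<integral>\<^sup>+ x. (\<integral>\<^sup>+ y. ennreal ((u x - u y)^2 * Jk \<alpha> B x y) * indicator (halfspace k) y \<partial>lborel)
              * indicator (halfspace k) x \<partial>lborel)"

definition E1form :: "'n::finite \<Rightarrow> real \<Rightarrow> (real ^ 'n \<Rightarrow> real ^ 'n \<Rightarrow> real) \<Rightarrow> (real ^ 'n \<Rightarrow> real) \<Rightarrow> ennreal" where
  "E1form k \<alpha> B u = Eform k \<alpha> B u + (\<integral>\<^sup>+ x. ennreal ((u x)^2) * indicator (halfspace k) x \<partial>lborel)"

text \<open>\<open>\<F>\<close>: closure of C_c^\<infinity>(R^d_+) w.r.t. \<open>\<E>_1\<close> (Borel representatives).\<close>
definition Fdom :: "'n::finite \<Rightarrow> real \<Rightarrow> (real ^ 'n \<Rightarrow> real ^ 'n \<Rightarrow> real) \<Rightarrow> (real ^ 'n \<Rightarrow> real) set" where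
  "Fdom k \<alpha> B = {u. u \<in> borel_measurable lborel \<and>
      (\<exists>\<phi>. (\<forall>j. \<phi> j \<in> Cc_inf_half k) \<and> (\<lambda>j. E1form k \<alpha> B (\<lambda>x. u x - \<phi> j x)) \<longlonglongrightarrow> 0)}"

end

theory Submission
  imports Defs "HOL-Library.Nat_Bijection"
begin


lemma Basis_cart_range: "(Basis :: (real^'n::finite) set) = range (\<lambda>i. axis i 1)"
  by (auto simp: Basis_vec_def)

lemma sum_Basis_cart: "(\<Sum>j\<in>(Basis :: (real^'n::finite) set). f j) = (\<Sum>i\<in>UNIV. f (axis i 1))"
  unfolding Basis_cart_range by (subst sum.reindex) (auto simp: inj_on_def axis_eq_axis)

lemma prod_Basis_cart: "(\<Prod>j\<in>(Basis :: (real^'n::finite) set). f j) = (\<Prod>i\<in>UNIV. f (axis i 1))"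
  unfolding Basis_cart_range by (subst prod.reindex) (auto simp: inj_on_def axis_eq_axis)

lemma lborel_affine_cart:
  fixes c :: "'n::finite \<Rightarrow> real" and t :: "real^'n"
  assumes c: "\<And>i. c i \<noteq> 0" and g[measurable]: "g \<in> borel_measurable borel"
  shows "(\<integral>\<^sup>+y. g y \<partial>lborel) = ennreal (\<Prod>i\<in>UNIV. \<bar>c i\<bar>) * (\<integral>\<^sup>+x. g (t + (\<chi> i. c i * x$i)) \<partial>lborel)"
proof -
  define c' where "c' j = (\<Sum>i\<in>UNIV. c i * (j::real^'n) $ i)" for j
  have c'ax: "c' (axis i 1) = c i" for i
    unfolding c'_def by (simp add: axis_def if_distrib cong: if_cong)
  have T0: "(\<Sum>i\<in>UNIV. (c i * x$i) *\<^sub>R axis i (1::real)) = (\<chi> i. c i * x$i)" for x :: "real^'n"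
    by (simp add: vec_eq_iff sum_component axis_def if_distrib cong: if_cong)
  have T: "t + (\<Sum>j\<in>Basis. (c' j * (x \<bullet> j)) *\<^sub>R j) = t + (\<chi> i. c i * x$i)" for x :: "real^'n"
    using T0[of x] by (simp add: sum_Basis_cart c'ax cart_eq_inner_axis[symmetric])
  have "lborel = density (distr lborel borel (\<lambda>x. t + (\<Sum>j\<in>Basis. (c' j * (x \<bullet> j)) *\<^sub>R j))) (\<lambda>_. (\<Prod>j\<in>Basis. \<bar>c' j\<bar>))"
    by (rule lborel_affine_euclidean) (auto simp: Basis_cart_range c'ax c)
  also have "\<dots> = density (distr lborel borel (\<lambda>x. t + (\<chi> i. c i * x$i))) (\<lambda>_. (\<Prod>i\<in>UNIV. \<bar>c i\<bar>))"
    by (simp add: T prod_Basis_cart c'ax)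
  finally have eq: "lborel = \<dots>" .
  have mT[measurable]: "(\<lambda>x. t + (\<chi> i. c i * x$i)) \<in> borel_measurable borel"
    by (intro borel_measurable_continuous_onI continuous_intros)
  have "(\<integral>\<^sup>+y. g y \<partial>lborel) = (\<integral>\<^sup>+y. g y \<partial>density (distr lborel borel (\<lambda>x. t + (\<chi> i. c i * x$i))) (\<lambda>_. (\<Prod>i\<in>UNIV. \<bar>c i\<bar>)))"
    using eq by simp
  also have "\<dots> = ennreal (\<Prod>i\<in>UNIV. \<bar>c i\<bar>) * (\<integral>\<^sup>+x. g (t + (\<chi> i. c i * x$i)) \<partial>lborel)"
    using mT by (subst nn_integral_density) (auto simp: nn_integral_distr nn_integral_cmult)
  finally show ?thesis .
qed


definition rho :: "'n::finite \<Rightarrow> real^'n \<Rightarrow> real" where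
  "rho k x = 2 powr real_of_int \<lfloor>log 2 (x$k)\<rfloor>"

definition Pm :: "'n::finite \<Rightarrow> real^'n \<Rightarrow> real^'n \<Rightarrow> real^'n" where
  "Pm k z x = (\<chi> i. if i = k then z$k * x$k else x$i + rho k x * z$i)"

definition Hf :: "'n::finite \<Rightarrow> real \<Rightarrow> (real^'n \<Rightarrow> real) \<Rightarrow> ennreal" where
  "Hf k \<alpha> u = (\<integral>\<^sup>+ x. ennreal ((u x)^2 / (x $ k) powr \<alpha>) * indicator (halfspace k) x \<partial>lborel)"

lemma measurable_vec_lambda:
  assumes "\<And>i. (\<lambda>x. f x i) \<in> borel_measurable M"
  shows "(\<lambda>x. (\<chi> i. f x i) :: real^'n::finite) \<in> borel_measurable M"
  using assms by (subst borel_measurable_euclidean_space) (auto simp: Basis_cart_range cart_eq_inner_axis[symmetric])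

lemma vec_nth_measurable[measurable]: "(\<lambda>x::real^'n::finite. x $ i) \<in> borel_measurable borel"
  by (intro borel_measurable_continuous_onI continuous_intros)

lemma rho_measurable[measurable]: "rho k \<in> borel_measurable borel"
  unfolding rho_def by measurable

lemma Pm_measurable': "(\<lambda>p. Pm k (fst p) (snd p)) \<in> borel_measurable (borel \<Otimes>\<^sub>M borel)"
  unfolding Pm_def by (rule measurable_vec_lambda) measurable

lemma Pm_measurable[measurable]: "(\<lambda>(z,x). Pm k z x) \<in> borel_measurable (borel \<Otimes>\<^sub>M borel)"
  using Pm_measurable' by (simp add: split_beta')

lemma Pm_measurable2[measurable]: "Pm k z \<in> borel_measurable borel"
  unfolding Pm_def by (rule measurable_vec_lambda) measurable

lemma rho_bounds:
  assumes "0 < x$k"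
  shows "0 < rho k x" "rho k x \<le> x$k" "x$k < 2 * rho k x"
proof -
  have "2 powr real_of_int \<lfloor>log 2 (x$k)\<rfloor> \<le> 2 powr log 2 (x$k)"
    by (intro powr_mono) auto
  then show "rho k x \<le> x$k" using assms by (simp add: rho_def)
  have "2 powr log 2 (x$k) < 2 powr (real_of_int \<lfloor>log 2 (x$k)\<rfloor> + 1)"
    by (intro powr_less_mono) auto
  then show "x$k < 2 * rho k x" using assms by (simp add: rho_def powr_add)
  show "0 < rho k x" by (simp add: rho_def)
qed

lemma first_term:
  fixes u :: "real^'n::finite \<Rightarrow> real" and z :: "real^'n"
  assumes u[measurable]: "u \<in> borel_measurable borel" and s: "0 < z$k"
  shows "(\<integral>\<^sup>+x. ennreal ((u (Pm k z x))^2 / (x$k) powr \<alpha>) * indicator (halfspace k) x \<partial>lborel)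
         = ennreal ((z$k) powr (\<alpha>-1)) * Hf k \<alpha> u"
proof -
  define s where "s = z$k"
  have s0: "0 < s" using s by (simp add: s_def)
  define band where "band j = {x::real^'n. 0 < x$k \<and> \<lfloor>log 2 (x$k)\<rfloor> = j}" for j::int
  define band' where "band' j = {y::real^'n. 0 < y$k \<and> \<lfloor>log 2 (y$k / s)\<rfloor> = j}" for j::int
  define G where "G x = ennreal ((u (Pm k z x))^2 / (x$k) powr \<alpha>)" for x
  define F where "F y = ennreal ((u y)^2 / (y$k) powr \<alpha>)" for y :: "real^'n"
  have bandm[measurable]: "band j \<in> sets borel" for j unfolding band_def by measurable
  have band'm[measurable]: "band' j \<in> sets borel" for j unfolding band'_def by measurable
  have Gm[measurable]: "G \<in> borel_measurable borel" unfolding G_def by measurable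
  have Fm[measurable]: "F \<in> borel_measurable borel" unfolding F_def by measurable
  have disj: "disjoint_family (\<lambda>n. band (int_decode n))"
    unfolding disjoint_family_on_def band_def
    by (auto simp: inj_int_decode[THEN inj_eq])
  have disj': "disjoint_family (\<lambda>n. band' (int_decode n))"
    unfolding disjoint_family_on_def band'_def
    by (auto simp: inj_int_decode[THEN inj_eq])
  have un: "(\<Union>n. band (int_decode n)) = halfspace k"
  proof (intro set_eqI iffI)
    fix x assume "x \<in> halfspace k"
    then have "x \<in> band (int_decode (int_encode \<lfloor>log 2 (x$k)\<rfloor>))"
      by (simp add: band_def halfspace_def)
    then show "x \<in> (\<Union>n. band (int_decode n))" by blast
  qed (auto simp: band_def halfspace_def)
  have un': "(\<Union>n. band' (int_decode n)) = halfspace k"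
  proof (intro set_eqI iffI)
    fix x assume "x \<in> halfspace k"
    then have "x \<in> band' (int_decode (int_encode \<lfloor>log 2 (x$k / s)\<rfloor>))"
      by (simp add: band'_def halfspace_def)
    then show "x \<in> (\<Union>n. band' (int_decode n))" by blast
  qed (auto simp: band'_def halfspace_def)
  have bterm: "(\<integral>\<^sup>+x. G x * indicator (band j) x \<partial>lborel)
     = ennreal (s powr (\<alpha>-1)) * (\<integral>\<^sup>+y. F y * indicator (band' j) y \<partial>lborel)" for j
  proof -
    define c where "c i = (if i = k then s else 1)" for i
    define t where "t = (\<chi> i. if i = k then 0 else 2 powr j * z$i)"
    define g where "g y = ennreal ((u y)^2 / (y$k / s) powr \<alpha>) * indicator (band' j) y" for y
    have gm[measurable]: "g \<in> borel_measurable borel" unfolding g_def by measurable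
    have eqT: "g (t + (\<chi> i. c i * x$i)) = G x * indicator (band j) x" for x
    proof (cases "x \<in> band j")
      case True
      then have xk: "0 < x$k" and fl: "\<lfloor>log 2 (x$k)\<rfloor> = j" by (auto simp: band_def)
      have rh: "rho k x = 2 powr j" using fl by (simp add: rho_def)
      have P: "t + (\<chi> i. c i * x$i) = Pm k z x"
        by (simp add: vec_eq_iff Pm_def t_def c_def rh s_def mult.commute)
      have "Pm k z x $ k = s * x$k" by (simp add: Pm_def s_def)
      then have "Pm k z x \<in> band' j" using xk s0 fl by (simp add: band'_def)
      then show ?thesis using True s0 by (simp add: g_def G_def P \<open>Pm k z x $ k = s * x$k\<close>)
    next
      case False
      have "(t + (\<chi> i. c i * x$i)) $ k = s * x$k" by (simp add: t_def c_def)
      then have "t + (\<chi> i. c i * x$i) \<notin> band' j" using False s0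
        by (auto simp: band'_def band_def zero_less_mult_iff)
      then show ?thesis using False by (simp add: g_def)
    qed
    have prod: "(\<Prod>i\<in>UNIV. \<bar>c i\<bar>) = s"
    proof -
      have "(\<Prod>i\<in>UNIV. \<bar>c i\<bar>) = (\<Prod>i\<in>UNIV. if i = k then s else 1)"
        using s0 by (intro prod.cong) (auto simp: c_def)
      also have "\<dots> = s" by (simp add: prod.delta)
      finally show ?thesis .
    qed
    have c0: "c i \<noteq> 0" for i using s0 by (simp add: c_def)
    have A: "(\<integral>\<^sup>+y. g y \<partial>lborel) = ennreal s * (\<integral>\<^sup>+x. G x * indicator (band j) x \<partial>lborel)"
      using lborel_affine_cart[where c=c and t=t and g=g, OF c0 gm] by (simp add: eqT prod)
    have gF: "g y = ennreal (s powr \<alpha>) * (F y * indicator (band' j) y)" for y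
    proof (cases "y \<in> band' j")
      case True
      then have yk: "0 < y$k" by (simp add: band'_def)
      have "(u y)^2 / (y$k / s) powr \<alpha> = s powr \<alpha> * ((u y)^2 / (y$k) powr \<alpha>)"
        using yk s0 by (simp add: powr_divide field_simps)
      moreover have "ennreal (s powr \<alpha> * ((u y)^2 / (y$k) powr \<alpha>)) = ennreal (s powr \<alpha>) * ennreal ((u y)^2 / (y$k) powr \<alpha>)"
        by (rule ennreal_mult) auto
      ultimately show ?thesis using True by (simp add: g_def F_def del: times_divide_eq_right)
    qed (simp add: g_def)
    have B: "(\<integral>\<^sup>+y. g y \<partial>lborel) = ennreal (s powr \<alpha>) * (\<integral>\<^sup>+y. F y * indicator (band' j) y \<partial>lborel)"
      by (simp add: gF nn_integral_cmult)
    have "(\<integral>\<^sup>+x. G x * indicator (band j) x \<partial>lborel)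
       = ennreal (1/s) * (ennreal s * (\<integral>\<^sup>+x. G x * indicator (band j) x \<partial>lborel))"
      using s0 by (simp add: mult.assoc[symmetric] ennreal_mult[symmetric])
    also have "\<dots> = ennreal (1/s) * (ennreal (s powr \<alpha>) * (\<integral>\<^sup>+y. F y * indicator (band' j) y \<partial>lborel))"
      using A B by simp
    also have "\<dots> = ennreal (s powr (\<alpha>-1)) * (\<integral>\<^sup>+y. F y * indicator (band' j) y \<partial>lborel)"
      using s0 by (simp add: mult.assoc[symmetric] ennreal_mult[symmetric] powr_diff)
    finally show ?thesis .
  qed
  have "(\<integral>\<^sup>+x. G x * indicator (halfspace k) x \<partial>lborel)
      = (\<integral>\<^sup>+x. (\<Sum>n. G x * indicator (band (int_decode n)) x) \<partial>lborel)"
    by (simp add: suminf_indicator[OF disj] un)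
  also have "\<dots> = (\<Sum>n. (\<integral>\<^sup>+x. G x * indicator (band (int_decode n)) x \<partial>lborel))"
    by (rule nn_integral_suminf) measurable
  also have "\<dots> = (\<Sum>n. ennreal (s powr (\<alpha>-1)) * (\<integral>\<^sup>+y. F y * indicator (band' (int_decode n)) y \<partial>lborel))"
    by (simp add: bterm)
  also have "\<dots> = ennreal (s powr (\<alpha>-1)) * (\<Sum>n. (\<integral>\<^sup>+y. F y * indicator (band' (int_decode n)) y \<partial>lborel))"
    by simp
  also have "(\<Sum>n. (\<integral>\<^sup>+y. F y * indicator (band' (int_decode n)) y \<partial>lborel))
      = (\<integral>\<^sup>+y. (\<Sum>n. F y * indicator (band' (int_decode n)) y) \<partial>lborel)"
    by (rule nn_integral_suminf[symmetric]) measurable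
  also have "\<dots> = (\<integral>\<^sup>+y. F y * indicator (halfspace k) y \<partial>lborel)"
    by (simp add: suminf_indicator[OF disj'] un')
  finally show ?thesis by (simp add: G_def F_def Hf_def s_def)
qed


lemma key_real:
  fixes xk r D Cx \<alpha> :: real
  assumes xk: "0 < xk" and r: "0 < r" "r \<le> 2*D*xk" and D: "D \<ge> 1" and Cx: "Cx \<ge> (xk/2) powr D"
    and a: "0 < \<alpha>"
  shows "1 / xk powr \<alpha> \<le> Cx * (2 powr D * (2*D) powr (D+\<alpha>)) * r powr (-D-\<alpha>)"
proof -
  have "(2*D*xk) powr (-D-\<alpha>) \<le> r powr (-D-\<alpha>)"
    using r D a by (intro powr_mono2') auto
  moreover have "(2*D*xk) powr (-D-\<alpha>) = (2*D) powr (-D-\<alpha>) * xk powr (-D-\<alpha>)"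
    using D xk by (simp add: powr_mult)
  ultimately have r1: "(2*D) powr (-D-\<alpha>) * xk powr (-D-\<alpha>) \<le> r powr (-D-\<alpha>)" by simp
  have c1: "(xk/2) powr D = xk powr D / 2 powr D" using xk by (simp add: powr_divide)
  have "1 / xk powr \<alpha> = (xk powr D / 2 powr D) * (2 powr D * (2*D) powr (D+\<alpha>)) * ((2*D) powr (-D-\<alpha>) * xk powr (-D-\<alpha>))"
  proof -
    have e1: "(2*D) powr (D+\<alpha>) * (2*D) powr (-D-\<alpha>) = 1"
      using D by (simp add: powr_add[symmetric])
    have e2: "xk powr D * xk powr (-D-\<alpha>) = xk powr (-\<alpha>)"
      using xk by (simp add: powr_add[symmetric])
    have "(xk powr D / 2 powr D) * (2 powr D * (2*D) powr (D+\<alpha>)) * ((2*D) powr (-D-\<alpha>) * xk powr (-D-\<alpha>))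
        = (xk powr D * xk powr (-D-\<alpha>)) * ((2*D) powr (D+\<alpha>) * (2*D) powr (-D-\<alpha>))"
      by (simp add: field_simps)
    also have "\<dots> = xk powr (-\<alpha>)" using e1 e2 by simp
    finally show ?thesis by (simp add: powr_minus divide_inverse)
  qed
  also have "\<dots> \<le> Cx * (2 powr D * (2*D) powr (D+\<alpha>)) * r powr (-D-\<alpha>)"
  proof -
    have C0: "0 \<le> Cx" using Cx by (meson order_trans powr_ge_zero)
    show ?thesis using Cx c1 r1 D C0 by (intro mult_mono) auto
  qed
  finally show ?thesis .
qed


definition Zb :: "'n::finite \<Rightarrow> real \<Rightarrow> real \<Rightarrow> (real^'n) set" where
  "Zb k a b = box (\<chi> i. if i = k then a else -1) (\<chi> i. if i = k then b else 1)"

definition Wk :: "'n::finite \<Rightarrow> real \<Rightarrow> real \<Rightarrow> real^'n \<Rightarrow> real^'n \<Rightarrow> real" where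
  "Wk k \<alpha> L x y = (if 0 < x$k \<and> 0 < y$k \<and> x \<noteq> y \<and> dist x y \<le> L * min (x$k) (y$k)
                    then dist x y powr (- real CARD('n) - \<alpha>) else 0)"

lemma Wk_measurable[measurable]: "(\<lambda>(x,y). Wk k \<alpha> L x y) \<in> borel_measurable (borel \<Otimes>\<^sub>M borel)"
  unfolding Wk_def by measurable

lemma Wk_nonneg: "0 \<le> Wk k \<alpha> L x y"
  by (simp add: Wk_def)

lemma Zb_mem: "z \<in> Zb k a b \<longleftrightarrow> a < z$k \<and> z$k < b \<and> (\<forall>i. i \<noteq> k \<longrightarrow> -1 < z$i \<and> z$i < 1)"
  by (auto simp: Zb_def mem_box_cart)

lemma Pm_props:
  fixes x z :: "real^'n::finite"
  assumes x: "0 < x$k" and z: "z \<in> Zb k a b" and ab: "1/3 \<le> a" "a < b" "b \<le> 3" "b \<le> 1 \<or> 1 \<le> a"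
  shows "0 < Pm k z x $ k" "Pm k z x \<noteq> x" "dist x (Pm k z x) \<le> 2 * real CARD('n) * x$k"
    "x$k \<le> 3 * (Pm k z x $ k)"
proof -
  have zk: "a < z$k" "z$k < b" using z by (auto simp: Zb_mem)
  have zi: "\<bar>z$i\<bar> < 1" if "i \<noteq> k" for i using z that by (auto simp: Zb_mem)
  have Pk: "Pm k z x $ k = z$k * x$k" by (simp add: Pm_def)
  show "0 < Pm k z x $ k" using zk ab x by (simp add: Pk)
  have "z$k \<noteq> 1" using zk ab by auto
  then have "Pm k z x $ k \<noteq> x $ k" using x by (simp add: Pk)
  then show "Pm k z x \<noteq> x" by metis
  show "x$k \<le> 3 * (Pm k z x $ k)" using zk ab x by (simp add: Pk)
  have comp: "\<bar>(x - Pm k z x) $ i\<bar> \<le> 2 * x$k" for i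
  proof (cases "i = k")
    case True
    have "\<bar>(x - Pm k z x) $ i\<bar> = \<bar>1 - z$k\<bar> * x$k" proof -
      have "x$k - z$k * x$k = (1 - z$k) * x$k" by (simp add: algebra_simps)
      then show ?thesis using True x by (simp add: Pk abs_mult)
    qed
    also have "\<dots> \<le> 2 * x$k" using zk ab x by (intro mult_right_mono) auto
    finally show ?thesis .
  next
    case False
    have "\<bar>(x - Pm k z x) $ i\<bar> = rho k x * \<bar>z$i\<bar>" using False rho_bounds(1)[OF x]
      by (simp add: Pm_def abs_mult)
    also have "\<dots> \<le> x$k * 1" using rho_bounds[OF x] zi[OF False]
      by (intro mult_mono) auto
    finally show ?thesis using x by simp
  qed
  have "dist x (Pm k z x) = norm (x - Pm k z x)" by (simp add: dist_norm)
  also have "\<dots> \<le> (\<Sum>i\<in>UNIV. \<bar>(x - Pm k z x) $ i\<bar>)" by (rule norm_le_l1_cart)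
  also have "\<dots> \<le> (\<Sum>i\<in>(UNIV::'n set). 2 * x$k)" by (intro sum_mono comp)
  also have "\<dots> = 2 * real CARD('n) * x$k" by simp
  finally show "dist x (Pm k z x) \<le> 2 * real CARD('n) * x$k" .
qed


lemma energy_x:
  fixes u :: "real^'n::finite \<Rightarrow> real" and x :: "real^'n"
  assumes u[measurable]: "u \<in> borel_measurable borel" and x: "0 < x$k" and a0: "0 < \<alpha>"
    and ab: "1/3 \<le> a" "a < b" "b \<le> 3" "b \<le> 1 \<or> 1 \<le> a"
  shows "(\<integral>\<^sup>+z. ennreal ((u x - u (Pm k z x))^2 / (x$k) powr \<alpha>) * indicator (Zb k a b) z \<partial>lborel)
     \<le> ennreal (2 powr real CARD('n) * (2*real CARD('n)) powr (real CARD('n)+\<alpha>)) *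
        (\<integral>\<^sup>+y. ennreal ((u x - u y)^2 * Wk k \<alpha> (6*real CARD('n)) x y) \<partial>lborel)"
proof -
  define D where "D = real CARD('n)"
  have D1: "1 \<le> D" by (simp add: D_def Suc_le_eq)
  define M where "M = 2 powr D * (2*D) powr (D+\<alpha>)"
  have M0: "0 \<le> M" by (simp add: M_def)
  define N where "N = {y::real^'n. 0 < y$k \<and> y \<noteq> x \<and> dist x y \<le> 2*D*x$k \<and> x$k \<le> 3*y$k}"
  define g where "g y = ennreal ((u x - u y)^2 / (x$k) powr \<alpha>) * indicator N y" for y
  have Nm[measurable]: "N \<in> sets borel" unfolding N_def by measurable
  have gm[measurable]: "g \<in> borel_measurable borel" unfolding g_def by measurable
  have s1: "(\<integral>\<^sup>+z. ennreal ((u x - u (Pm k z x))^2 / (x$k) powr \<alpha>) * indicator (Zb k a b) z \<partial>lborel)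
      \<le> (\<integral>\<^sup>+z. g (Pm k z x) \<partial>lborel)"
  proof (intro nn_integral_mono)
    fix z
    show "ennreal ((u x - u (Pm k z x))^2 / (x$k) powr \<alpha>) * indicator (Zb k a b) z \<le> g (Pm k z x)"
    proof (cases "z \<in> Zb k a b")
      case True
      note P = Pm_props[OF x True ab]
      have "Pm k z x \<in> N" using P by (auto simp: N_def D_def)
      then show ?thesis using True by (simp add: g_def)
    qed simp
  qed
  define c where "c i = (if i = k then x$k else rho k x)" for i
  define t where "t = (\<chi> i. if i = k then 0 else x$i)"
  have Peq: "Pm k z x = t + (\<chi> i. c i * z$i)" for z
    by (simp add: vec_eq_iff Pm_def t_def c_def mult.commute)
  define Cx where "Cx = (\<Prod>i\<in>UNIV. \<bar>c i\<bar>)"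
  have c0: "c i \<noteq> 0" for i using x rho_bounds[OF x] by (simp add: c_def)
  have Cx0: "0 < Cx" unfolding Cx_def using c0 by (intro prod_pos) auto
  have Cxge: "(x$k/2) powr D \<le> Cx"
  proof -
    have "(x$k/2) powr D = (\<Prod>i\<in>(UNIV::'n set). x$k/2)" using x by (simp add: D_def powr_realpow)
    also have "\<dots> \<le> Cx" unfolding Cx_def
      using x rho_bounds[OF x] by (intro prod_mono) (auto simp: c_def)
    finally show ?thesis .
  qed
  have A: "(\<integral>\<^sup>+y. g y \<partial>lborel) = ennreal Cx * (\<integral>\<^sup>+z. g (Pm k z x) \<partial>lborel)"
    using lborel_affine_cart[where c=c and t=t and g=g, OF c0 gm] by (simp add: Peq Cx_def)
  have B: "g y \<le> ennreal (Cx * M) * ennreal ((u x - u y)^2 * Wk k \<alpha> (6*D) x y)" for y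
  proof (cases "y \<in> N")
    case True
    then have y: "0 < y$k" "y \<noteq> x" "dist x y \<le> 2*D*x$k" "x$k \<le> 3*y$k" by (auto simp: N_def)
    have r0: "0 < dist x y" using y by simp
    have h1: "2*D*x$k \<le> 6*D*x$k" using D1 x by (intro mult_right_mono) auto
    have h2: "2*D*x$k \<le> (2*D)*(3*y$k)" using D1 y by (intro mult_left_mono) auto
    have "dist x y \<le> 6*D * min (x$k) (y$k)" using y h1 h2 by (auto simp: min_def)
    then have W: "Wk k \<alpha> (6*D) x y = dist x y powr (-D-\<alpha>)"
      using x y by (auto simp: Wk_def D_def dist_commute)
    have kr: "1 / (x$k) powr \<alpha> \<le> Cx * M * dist x y powr (-D-\<alpha>)"
      using key_real[OF x r0 y(3) D1 Cxge a0] by (simp add: M_def mult.assoc)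
    have "(u x - u y)^2 / (x$k) powr \<alpha> = (u x - u y)^2 * (1 / (x$k) powr \<alpha>)" by simp
    also have "\<dots> \<le> (u x - u y)^2 * (Cx * M * dist x y powr (-D-\<alpha>))"
      by (intro mult_left_mono kr) auto
    finally have le: "(u x - u y)^2 / (x$k) powr \<alpha> \<le> Cx * M * ((u x - u y)^2 * Wk k \<alpha> (6*D) x y)"
      unfolding W by (simp add: algebra_simps)
    have "ennreal (Cx * M) * ennreal ((u x - u y)^2 * Wk k \<alpha> (6*D) x y)
        = ennreal (Cx * M * ((u x - u y)^2 * Wk k \<alpha> (6*D) x y))"
      using Cx0 M0 mult_nonneg_nonneg[OF zero_le_power2 Wk_nonneg] by (intro ennreal_mult[symmetric]) auto
    then show ?thesis using True le by (simp add: g_def ennreal_leI)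
  qed (simp add: g_def)
  have C: "(\<integral>\<^sup>+y. g y \<partial>lborel) \<le> ennreal (Cx * M) * (\<integral>\<^sup>+y. ennreal ((u x - u y)^2 * Wk k \<alpha> (6*D) x y) \<partial>lborel)"
  proof -
    have "(\<integral>\<^sup>+y. g y \<partial>lborel) \<le> (\<integral>\<^sup>+y. ennreal (Cx * M) * ennreal ((u x - u y)^2 * Wk k \<alpha> (6*D) x y) \<partial>lborel)"
      by (intro nn_integral_mono B)
    also have "\<dots> = ennreal (Cx * M) * (\<integral>\<^sup>+y. ennreal ((u x - u y)^2 * Wk k \<alpha> (6*D) x y) \<partial>lborel)"
    proof (rule nn_integral_cmult)
      have "(\<lambda>y. Wk k \<alpha> (6*D) x y) \<in> borel_measurable borel"
        using measurable_Pair2[OF Wk_measurable, of x] by simp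
      then show "(\<lambda>y. ennreal ((u x - u y)^2 * Wk k \<alpha> (6*D) x y)) \<in> borel_measurable lborel"
        by simp
    qed
    finally show ?thesis .
  qed
  have "(\<integral>\<^sup>+z. g (Pm k z x) \<partial>lborel) = ennreal (1/Cx) * (ennreal Cx * (\<integral>\<^sup>+z. g (Pm k z x) \<partial>lborel))"
    using Cx0 by (simp add: mult.assoc[symmetric] ennreal_mult[symmetric])
  also have "\<dots> \<le> ennreal (1/Cx) * (ennreal (Cx * M) * (\<integral>\<^sup>+y. ennreal ((u x - u y)^2 * Wk k \<alpha> (6*D) x y) \<partial>lborel))"
    using A C by (intro mult_left_mono) auto
  also have "\<dots> = ennreal M * (\<integral>\<^sup>+y. ennreal ((u x - u y)^2 * Wk k \<alpha> (6*D) x y) \<partial>lborel)"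
    using Cx0 M0 by (simp add: mult.assoc[symmetric] ennreal_mult[symmetric])
  finally show ?thesis using s1 by (simp add: M_def D_def)
qed


definition E0 :: "'n::finite \<Rightarrow> real \<Rightarrow> real \<Rightarrow> (real^'n \<Rightarrow> real) \<Rightarrow> ennreal" where
  "E0 k \<alpha> L u = (\<integral>\<^sup>+x. (\<integral>\<^sup>+y. ennreal ((u x - u y)^2 * Wk k \<alpha> L x y) \<partial>lborel) \<partial>lborel)"

lemma absorb:
  fixes H X :: ennreal and p :: real
  assumes "H \<le> ennreal p * H + X" "H < \<infinity>" "0 \<le> p" "p < 1"
  shows "ennreal (1-p) * H \<le> X"
proof -
  obtain h where h: "H = ennreal h" "0 \<le> h" using assms(2) by (cases H) auto
  show ?thesis
  proof (cases X)
    case (real xx)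
    have "ennreal h \<le> ennreal p * ennreal h + ennreal xx" using assms(1) h real by simp
    also have "\<dots> = ennreal (p*h + xx)"
      using h real assms(3) by (simp add: ennreal_mult[symmetric] ennreal_plus[symmetric] del: ennreal_plus)
    finally have "h \<le> p*h + xx" using real assms(3) h by (subst (asm) ennreal_le_iff) auto
    then have "(1-p)*h \<le> xx" by (simp add: algebra_simps)
    then show ?thesis using real h assms by (simp add: ennreal_mult[symmetric] ennreal_leI)
  qed simp
qed

lemma Zb_vol:
  assumes "a < b"
  shows "emeasure lborel (Zb k a b) = ennreal (\<Prod>i\<in>UNIV. if i = k then b - a else 2)"
proof -
  have "emeasure lborel (Zb k a b) = (\<Prod>j\<in>Basis. ((\<chi> i. if i = k then b else 1) - (\<chi> i. if i = k then a else -1)) \<bullet> j)"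
    unfolding Zb_def using assms by (intro emeasure_lborel_box) (auto simp: Basis_cart_range inner_axis)
  also have "\<dots> = ennreal (\<Prod>i\<in>UNIV. if i = k then b - a else 2)"
    by (simp add: prod_Basis_cart cart_eq_inner_axis[symmetric]) (rule arg_cong[where f=ennreal], rule prod.cong, auto)
  finally show ?thesis .
qed

lemma Zb_vol_pos: "a < b \<Longrightarrow> 0 < (\<Prod>i\<in>(UNIV::'n::finite set). if i = k then b - a else (2::real))"
  by (intro prod_pos) auto

lemma sq_split:
  fixes v w e :: real
  assumes "0 < e"
  shows "v^2 \<le> (1+e) * w^2 + (1 + 1/e) * (v - w)^2"
proof -
  have "0 \<le> (sqrt e * w - (v - w) / sqrt e)^2" by simp
  also have "\<dots> = e * w^2 - 2 * w * (v - w) + (v-w)^2 / e"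
    using assms by (simp add: power2_eq_square field_simps)
  finally have f1: "2 * w * (v - w) \<le> e * w^2 + (v-w)^2 / e" by simp
  have f2: "(1 + 1/e) * (v - w)^2 = (v-w)^2 + (v-w)^2/e" by (simp add: distrib_right)
  have f3: "v^2 = (v-w)^2 + 2*w*(v-w) + w^2" by (simp add: power2_eq_square algebra_simps)
  have f4: "(1+e) * w^2 = w^2 + e * w^2" by (simp add: distrib_right)
  show ?thesis using f1 f2 f3 f4 by linarith
qed


lemma core:
  fixes u :: "real^'n::finite \<Rightarrow> real"
  assumes u[measurable]: "u \<in> borel_measurable borel" and a0: "0 < \<alpha>"
    and ab: "1/3 \<le> a" "a < b" "b \<le> 3" "b \<le> 1 \<or> 1 \<le> a"
    and q: "\<And>s. a < s \<Longrightarrow> s < b \<Longrightarrow> s powr (\<alpha>-1) \<le> q" and q0: "0 \<le> q"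
    and e: "0 < \<epsilon>" "(1+\<epsilon>)*q < 1"
    and fin: "Hf k \<alpha> u < \<infinity>"
  shows "Hf k \<alpha> u \<le> ennreal ((1+1/\<epsilon>) * (2 powr real CARD('n) * (2*real CARD('n)) powr (real CARD('n)+\<alpha>))
            / ((1-(1+\<epsilon>)*q) * (\<Prod>i\<in>UNIV. if i = k then b - a else 2)))
           * E0 k \<alpha> (6*real CARD('n)) u"
proof -
  define D where "D = real CARD('n)"
  define Mx where "Mx = 2 powr D * (2*D) powr (D+\<alpha>)"
  define V where "V = (\<Prod>i\<in>(UNIV::'n set). if i = k then b - a else 2)"
  define p where "p = (1+\<epsilon>)*q"
  have V0: "0 < V" unfolding V_def using ab by (intro Zb_vol_pos) auto
  have p0: "0 \<le> p" "p < 1" using e q0 by (auto simp: p_def)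
  have Mx0: "0 \<le> Mx" by (simp add: Mx_def)
  define h where "h z x = ennreal ((u x - u (Pm k z x))^2 / (x$k) powr \<alpha>) * indicator (halfspace k) x" for z x
  have hm[measurable]: "(\<lambda>(z,x). h z x) \<in> borel_measurable (borel \<Otimes>\<^sub>M borel)"
    unfolding h_def halfspace_def by measurable
  have hm2[measurable]: "h z \<in> borel_measurable borel" for z
    using measurable_Pair2[OF hm, of z] by simp
  have Hm: "halfspace k \<in> sets borel" unfolding halfspace_def by measurable
  define Dz where "Dz z = (\<integral>\<^sup>+x. h z x \<partial>lborel)" for z
  have step: "ennreal (1-p) * Hf k \<alpha> u \<le> ennreal (1+1/\<epsilon>) * Dz z" if z: "z \<in> Zb k a b" for z
  proof -
    have zk: "a < z$k" "z$k < b" using z by (auto simp: Zb_mem)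
    have s0: "0 < z$k" using zk ab by auto
    define F1 where "F1 x = ennreal ((u (Pm k z x))^2 / (x$k) powr \<alpha>) * indicator (halfspace k) x" for x
    have F1m[measurable]: "F1 \<in> borel_measurable borel" unfolding F1_def using Hm by measurable
    have pw: "ennreal ((u x)^2 / (x$k) powr \<alpha>) * indicator (halfspace k) x
         \<le> ennreal (1+\<epsilon>) * F1 x + ennreal (1+1/\<epsilon>) * h z x" for x
    proof (cases "x \<in> halfspace k")
      case True
      then have xk: "0 < x$k" by (simp add: halfspace_def)
      define A where "A = (u (Pm k z x))^2 / (x$k) powr \<alpha>"
      define B where "B = (u x - u (Pm k z x))^2 / (x$k) powr \<alpha>"
      have A0: "0 \<le> A" and B0: "0 \<le> B" by (simp_all add: A_def B_def)
      have "(u x)^2 / (x$k) powr \<alpha> \<le> ((1+\<epsilon>) * (u (Pm k z x))^2 + (1+1/\<epsilon>) * (u x - u (Pm k z x))^2) / (x$k) powr \<alpha>"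
        using sq_split[OF e(1), of "u x" "u (Pm k z x)"] xk by (intro divide_right_mono) auto
      also have "\<dots> = (1+\<epsilon>) * A + (1+1/\<epsilon>) * B" by (simp add: A_def B_def add_divide_distrib)
      finally have le: "(u x)^2 / (x$k) powr \<alpha> \<le> (1+\<epsilon>) * A + (1+1/\<epsilon>) * B" .
      have "ennreal ((u x)^2 / (x$k) powr \<alpha>) \<le> ennreal ((1+\<epsilon>) * A + (1+1/\<epsilon>) * B)"
        using le by (rule ennreal_leI)
      also have "\<dots> = ennreal (1+\<epsilon>) * ennreal A + ennreal (1+1/\<epsilon>) * ennreal B"
        using A0 B0 e by (simp add: ennreal_plus[symmetric] ennreal_mult[symmetric] del: ennreal_plus)
      finally show ?thesis using True by (simp add: F1_def h_def A_def B_def)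
    qed simp
    have "Hf k \<alpha> u \<le> (\<integral>\<^sup>+x. ennreal (1+\<epsilon>) * F1 x + ennreal (1+1/\<epsilon>) * h z x \<partial>lborel)"
      unfolding Hf_def by (intro nn_integral_mono pw)
    also have "\<dots> = ennreal (1+\<epsilon>) * (\<integral>\<^sup>+x. F1 x \<partial>lborel) + ennreal (1+1/\<epsilon>) * Dz z"
      by (simp add: nn_integral_add nn_integral_cmult Dz_def)
    also have "(\<integral>\<^sup>+x. F1 x \<partial>lborel) = ennreal ((z$k) powr (\<alpha>-1)) * Hf k \<alpha> u"
      unfolding F1_def by (rule first_term[OF u s0])
    also have "ennreal ((z$k) powr (\<alpha>-1)) * Hf k \<alpha> u \<le> ennreal q * Hf k \<alpha> u"
      using q[OF zk] by (intro mult_right_mono ennreal_leI) auto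
    finally have "Hf k \<alpha> u \<le> ennreal (1+\<epsilon>) * (ennreal q * Hf k \<alpha> u) + ennreal (1+1/\<epsilon>) * Dz z"
      by (simp add: mult_left_mono add_right_mono)
    moreover have "ennreal (1+\<epsilon>) * (ennreal q * Hf k \<alpha> u) = ennreal p * Hf k \<alpha> u"
      using e q0 by (simp add: p_def mult.assoc ennreal_mult del: ennreal_plus)
    ultimately have "Hf k \<alpha> u \<le> ennreal p * Hf k \<alpha> u + ennreal (1+1/\<epsilon>) * Dz z"
      by simp
    then show ?thesis using absorb fin p0 by blast
  qed
  have "ennreal (1-p) * Hf k \<alpha> u * ennreal V = (\<integral>\<^sup>+z. (ennreal (1-p) * Hf k \<alpha> u) * indicator (Zb k a b) z \<partial>lborel)"
  proof -
    have "Zb k a b \<in> sets lborel" by (simp add: Zb_def)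
    then show ?thesis using ab Zb_vol[of a b k] by (simp add: nn_integral_cmult_indicator V_def)
  qed
  also have "\<dots> \<le> (\<integral>\<^sup>+z. ennreal (1+1/\<epsilon>) * (Dz z * indicator (Zb k a b) z) \<partial>lborel)"
    by (intro nn_integral_mono) (auto simp: step split: split_indicator)
  also have "\<dots> = ennreal (1+1/\<epsilon>) * (\<integral>\<^sup>+z. Dz z * indicator (Zb k a b) z \<partial>lborel)"
    by (rule nn_integral_cmult) (simp add: Dz_def Zb_def)
  also have "(\<integral>\<^sup>+z. Dz z * indicator (Zb k a b) z \<partial>lborel) = (\<integral>\<^sup>+z. (\<integral>\<^sup>+x. h z x * indicator (Zb k a b) z \<partial>lborel) \<partial>lborel)"
    unfolding Dz_def by (intro nn_integral_cong) (simp add: nn_integral_multc Zb_def)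
  also have "\<dots> = (\<integral>\<^sup>+x. (\<integral>\<^sup>+z. h z x * indicator (Zb k a b) z \<partial>lborel) \<partial>lborel)"
    by (rule lborel_pair.Fubini') (simp add: Zb_def)
  also have "\<dots> \<le> (\<integral>\<^sup>+x. ennreal Mx * (\<integral>\<^sup>+y. ennreal ((u x - u y)^2 * Wk k \<alpha> (6*D) x y) \<partial>lborel) \<partial>lborel)"
  proof (intro nn_integral_mono)
    fix x :: "real^'n"
    show "(\<integral>\<^sup>+z. h z x * indicator (Zb k a b) z \<partial>lborel) \<le> ennreal Mx * (\<integral>\<^sup>+y. ennreal ((u x - u y)^2 * Wk k \<alpha> (6*D) x y) \<partial>lborel)"
    proof (cases "x \<in> halfspace k")
      case True
      then have xk: "0 < x$k" by (simp add: halfspace_def)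
      have "(\<integral>\<^sup>+z. h z x * indicator (Zb k a b) z \<partial>lborel) = (\<integral>\<^sup>+z. ennreal ((u x - u (Pm k z x))^2 / (x$k) powr \<alpha>) * indicator (Zb k a b) z \<partial>lborel)"
        using True by (simp add: h_def)
      also have "\<dots> \<le> ennreal Mx * (\<integral>\<^sup>+y. ennreal ((u x - u y)^2 * Wk k \<alpha> (6*D) x y) \<partial>lborel)"
        using energy_x[OF u xk a0 ab] by (simp add: Mx_def D_def)
      finally show ?thesis .
    qed (simp add: h_def)
  qed
  also have "\<dots> = ennreal Mx * E0 k \<alpha> (6*D) u"
    unfolding E0_def by (rule nn_integral_cmult) measurable
  finally have main: "ennreal (1-p) * Hf k \<alpha> u * ennreal V \<le> ennreal (1+1/\<epsilon>) * (ennreal Mx * E0 k \<alpha> (6*D) u)"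
    by (simp add: mult_left_mono)
  have "Hf k \<alpha> u = ennreal (1/((1-p)*V)) * (ennreal (1-p) * Hf k \<alpha> u * ennreal V)"
  proof -
    have "ennreal (1/((1-p)*V)) * ennreal (1-p) * ennreal V = ennreal (1/((1-p)*V) * (1-p) * V)"
      using p0 V0 by (simp add: ennreal_mult[symmetric])
    also have "\<dots> = 1" using p0 V0 by simp
    finally show ?thesis by (metis mult.assoc mult.commute mult_1)
  qed
  also have "\<dots> \<le> ennreal (1/((1-p)*V)) * (ennreal (1+1/\<epsilon>) * (ennreal Mx * E0 k \<alpha> (6*D) u))"
    using main by (rule mult_left_mono) simp
  also have "\<dots> = ennreal ((1+1/\<epsilon>) * Mx / ((1-p)*V)) * E0 k \<alpha> (6*D) u"
  proof -
    have "ennreal (1/((1-p)*V)) * (ennreal (1+1/\<epsilon>) * ennreal Mx) = ennreal ((1+1/\<epsilon>) * Mx / ((1-p)*V))"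
      using p0 V0 e Mx0 by (simp add: ennreal_mult[symmetric] del: ennreal_plus)
    then show ?thesis by (metis mult.assoc)
  qed
  finally show ?thesis by (simp add: Mx_def D_def V_def p_def)
qed



lemma Btilde_lower:
  fixes x y :: "real^'n::finite"
  assumes x: "0 < x$k" and y: "0 < y$k" and xy: "x \<noteq> y" and d: "dist x y \<le> L * min (x$k) (y$k)"
    and L: "1 \<le> L" and b: "0 \<le> b1" "0 \<le> b2" "0 \<le> b3" "0 \<le> b4"
  shows "(1/L) powr b1 * (1/L) powr b2 * (ln 2) powr b3 * (ln 2) powr b4 \<le> Btilde k b1 b2 b3 b4 x y"
proof -
  define r where "r = dist x y"
  define m where "m = min (x$k) (y$k)"
  define M where "M = max (x$k) (y$k)"
  have r0: "0 < r" using xy by (simp add: r_def)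
  have m0: "0 < m" using x y by (simp add: m_def)
  have mM: "m \<le> M" by (simp add: m_def M_def)
  have rL: "r \<le> L * m" using d by (simp add: r_def m_def)
  have f1: "1/L \<le> min (m/r) 1"
  proof -
    have "1/L \<le> m/r" using rL r0 L m0 by (simp add: field_simps)
    moreover have "1/L \<le> 1" using L by simp
    ultimately show ?thesis by simp
  qed
  have f2: "1/L \<le> min (M/r) 1"
  proof -
    have "m/r \<le> M/r" using mM r0 by (simp add: divide_right_mono)
    then show ?thesis using f1 by linarith
  qed
  have f3: "ln 2 \<le> ln (1 + min M r / min m r)"
  proof -
    have "min m r \<le> min M r" using mM by simp
    then have "1 \<le> min M r / min m r" using m0 r0 by simp
    then have "2 \<le> 1 + min M r / min m r" by simp
    then show ?thesis by (subst ln_le_cancel_iff) auto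
  qed
  have f4: "ln 2 \<le> ln (1 + r / min M r)"
  proof -
    have "0 < min M r" using m0 mM r0 by simp
    then have "1 \<le> r / min M r" by simp
    then show ?thesis using m0 r0 by simp
  qed
  have L0: "0 \<le> 1/L" using L by simp
  have p1: "(1/L) powr b1 \<le> (min (m/r) 1) powr b1" using f1 L0 b by (intro powr_mono2) auto
  have p2: "(1/L) powr b2 \<le> (min (M/r) 1) powr b2" using f2 L0 b by (intro powr_mono2) auto
  have p3: "(ln 2) powr b3 \<le> (ln (1 + min M r / min m r)) powr b3" using f3 b by (intro powr_mono2) auto
  have p4: "(ln 2) powr b4 \<le> (ln (1 + r / min M r)) powr b4" using f4 b by (intro powr_mono2) auto
  have "(1/L) powr b1 * (1/L) powr b2 * (ln 2) powr b3 * (ln 2) powr b4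
      \<le> (min (m/r) 1) powr b1 * (min (M/r) 1) powr b2 * (ln (1 + min M r / min m r)) powr b3 * (ln (1 + r / min M r)) powr b4"
    using p1 p2 p3 p4 by (intro mult_mono) auto
  then show ?thesis by (simp add: Btilde_def Let_def r_def m_def M_def)
qed

lemma E0_le_Eform:
  fixes B :: "real^'n::finite \<Rightarrow> real^'n \<Rightarrow> real" and u :: "real^'n \<Rightarrow> real"
  assumes u[measurable]: "u \<in> borel_measurable borel"
    and c0: "0 < c0" and C0: "0 < C"
    and Blow: "\<And>x y. 0 < x$k \<Longrightarrow> 0 < y$k \<Longrightarrow> x \<noteq> y \<Longrightarrow> dist x y \<le> L * min (x$k) (y$k) \<Longrightarrow> c0 / C \<le> B x y"
  shows "E0 k \<alpha> L u \<le> ennreal (2 * C / c0) * Eform k \<alpha> B u"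
proof -
  have pw: "ennreal ((c0/C) * ((u x - u y)^2 * Wk k \<alpha> L x y))
      \<le> ennreal ((u x - u y)^2 * Jk \<alpha> B x y) * indicator (halfspace k) y * indicator (halfspace k) x" for x y
  proof (cases "0 < x$k \<and> 0 < y$k \<and> x \<noteq> y \<and> dist x y \<le> L * min (x$k) (y$k)")
    case True
    then have W: "Wk k \<alpha> L x y = dist x y powr (- real CARD('n) - \<alpha>)" by (simp add: Wk_def)
    have hx: "x \<in> halfspace k" "y \<in> halfspace k" using True by (auto simp: halfspace_def)
    have "(c0/C) * ((u x - u y)^2 * Wk k \<alpha> L x y) = (u x - u y)^2 * (dist x y powr (- real CARD('n) - \<alpha>) * (c0/C))"
      by (simp add: W)
    also have "\<dots> \<le> (u x - u y)^2 * (dist x y powr (- real CARD('n) - \<alpha>) * B x y)"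
      using Blow True by (intro mult_left_mono) auto
    finally show ?thesis using hx by (simp add: Jk_def ennreal_leI)
  next
    case False
    then have "Wk k \<alpha> L x y = 0" by (auto simp: Wk_def)
    then show ?thesis by simp
  qed
  have Wm: "(\<lambda>y. Wk k \<alpha> L x y) \<in> borel_measurable borel" for x
    using measurable_Pair2[OF Wk_measurable, of x] by simp
  have "ennreal (c0/C) * E0 k \<alpha> L u = (\<integral>\<^sup>+x. (\<integral>\<^sup>+y. ennreal ((c0/C) * ((u x - u y)^2 * Wk k \<alpha> L x y)) \<partial>lborel) \<partial>lborel)"
  proof -
    have "ennreal (c0/C) * E0 k \<alpha> L u = (\<integral>\<^sup>+x. ennreal (c0/C) * (\<integral>\<^sup>+y. ennreal ((u x - u y)^2 * Wk k \<alpha> L x y) \<partial>lborel) \<partial>lborel)"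
      unfolding E0_def by (rule nn_integral_cmult[symmetric]) measurable
    also have "\<dots> = (\<integral>\<^sup>+x. (\<integral>\<^sup>+y. ennreal ((c0/C) * ((u x - u y)^2 * Wk k \<alpha> L x y)) \<partial>lborel) \<partial>lborel)"
    proof (intro nn_integral_cong)
      fix x :: "real^'n"
      have "(\<integral>\<^sup>+y. ennreal ((c0/C) * ((u x - u y)^2 * Wk k \<alpha> L x y)) \<partial>lborel)
          = (\<integral>\<^sup>+y. ennreal (c0/C) * ennreal ((u x - u y)^2 * Wk k \<alpha> L x y) \<partial>lborel)"
        using c0 C0 mult_nonneg_nonneg[OF zero_le_power2 Wk_nonneg]
        by (intro nn_integral_cong ennreal_mult) auto
      also have "\<dots> = ennreal (c0/C) * (\<integral>\<^sup>+y. ennreal ((u x - u y)^2 * Wk k \<alpha> L x y) \<partial>lborel)"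
        using Wm[of x] by (intro nn_integral_cmult) simp
      finally show "ennreal (c0/C) * (\<integral>\<^sup>+y. ennreal ((u x - u y)^2 * Wk k \<alpha> L x y) \<partial>lborel)
          = (\<integral>\<^sup>+y. ennreal ((c0/C) * ((u x - u y)^2 * Wk k \<alpha> L x y)) \<partial>lborel)" by simp
    qed
    finally show ?thesis .
  qed
  also have "\<dots> \<le> (\<integral>\<^sup>+x. (\<integral>\<^sup>+y. ennreal ((u x - u y)^2 * Jk \<alpha> B x y) * indicator (halfspace k) y \<partial>lborel) * indicator (halfspace k) x \<partial>lborel)"
  proof (intro nn_integral_mono)
    fix x :: "real^'n"
    show "(\<integral>\<^sup>+y. ennreal ((c0/C) * ((u x - u y)^2 * Wk k \<alpha> L x y)) \<partial>lborel)
        \<le> (\<integral>\<^sup>+y. ennreal ((u x - u y)^2 * Jk \<alpha> B x y) * indicator (halfspace k) y \<partial>lborel) * indicator (halfspace k) x"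
    proof (cases "x \<in> halfspace k")
      case True
      then show ?thesis using pw[of x] by (simp add: nn_integral_mono)
    next
      case False
      then have "Wk k \<alpha> L x y = 0" for y by (simp add: Wk_def halfspace_def)
      then show ?thesis by simp
    qed
  qed
  also have "\<dots> = ennreal 2 * Eform k \<alpha> B u"
  proof -
    have h: "ennreal 2 * ennreal (1/2) = 1" using ennreal_mult[of 2 "1/2"] by simp
    show ?thesis unfolding Eform_def by (simp only: mult.assoc[symmetric] h mult_1_left)
  qed
  finally have A: "ennreal (c0/C) * E0 k \<alpha> L u \<le> ennreal 2 * Eform k \<alpha> B u" .
  have "E0 k \<alpha> L u = ennreal (C/c0) * (ennreal (c0/C) * E0 k \<alpha> L u)"
    using c0 C0 by (simp add: mult.assoc[symmetric] ennreal_mult[symmetric])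
  also have "\<dots> \<le> ennreal (C/c0) * (ennreal 2 * Eform k \<alpha> B u)"
    using A by (rule mult_left_mono) simp
  also have "\<dots> = ennreal (2 * C / c0) * Eform k \<alpha> B u"
  proof -
    have "ennreal (C/c0) * ennreal 2 = ennreal (2 * C / c0)"
      using c0 C0 ennreal_mult[of "C/c0" 2] by (simp add: mult.commute)
    then show ?thesis by (simp only: mult.assoc[symmetric])
  qed
  finally show ?thesis .
qed



lemma sq2: "((a::real) - b)^2 \<le> 2 * a^2 + 2 * b^2"
proof -
  have "0 \<le> (a + b)^2" by simp
  then show ?thesis by (simp add: power2_eq_square algebra_simps)
qed

lemma E0_sub:
  fixes u v :: "real^'n::finite \<Rightarrow> real"
  assumes u[measurable]: "u \<in> borel_measurable borel" and v[measurable]: "v \<in> borel_measurable borel"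
  shows "E0 k \<alpha> L v \<le> 2 * E0 k \<alpha> L u + 2 * E0 k \<alpha> L (\<lambda>x. u x - v x)"
proof -
  define w where "w x = u x - v x" for x
  have w[measurable]: "w \<in> borel_measurable borel" unfolding w_def by measurable
  have Wm[measurable]: "(\<lambda>(x,y). Wk k \<alpha> L x y) \<in> borel_measurable (lborel \<Otimes>\<^sub>M lborel)"
    using Wk_measurable by simp
  define fA where "fA x y = ennreal ((u x - u y)^2 * Wk k \<alpha> L x y)" for x y
  define fB where "fB x y = ennreal ((w x - w y)^2 * Wk k \<alpha> L x y)" for x y
  have fAm[measurable]: "(\<lambda>(x,y). fA x y) \<in> borel_measurable (lborel \<Otimes>\<^sub>M lborel)"
    unfolding fA_def by measurable
  have fBm[measurable]: "(\<lambda>(x,y). fB x y) \<in> borel_measurable (lborel \<Otimes>\<^sub>M lborel)"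
    unfolding fB_def by measurable
  have fAm2[measurable]: "fA x \<in> borel_measurable lborel" for x
    using measurable_Pair2[OF fAm, of x] by simp
  have fBm2[measurable]: "fB x \<in> borel_measurable lborel" for x
    using measurable_Pair2[OF fBm, of x] by simp
  have pw: "ennreal ((v x - v y)^2 * Wk k \<alpha> L x y) \<le> 2 * fA x y + 2 * fB x y" for x y
  proof -
    have W0: "0 \<le> Wk k \<alpha> L x y" by (rule Wk_nonneg)
    have "v x - v y = (u x - u y) - (w x - w y)" by (simp add: w_def)
    then have "(v x - v y)^2 \<le> 2 * (u x - u y)^2 + 2 * (w x - w y)^2" using sq2 by metis
    then have "(v x - v y)^2 * Wk k \<alpha> L x y \<le> 2 * ((u x - u y)^2 * Wk k \<alpha> L x y) + 2 * ((w x - w y)^2 * Wk k \<alpha> L x y)"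
    proof -
      have "(v x - v y)^2 * Wk k \<alpha> L x y \<le> (2 * (u x - u y)^2 + 2 * (w x - w y)^2) * Wk k \<alpha> L x y"
        using W0 \<open>(v x - v y)^2 \<le> _\<close> by (rule mult_right_mono[rotated])
      then show ?thesis by (simp add: algebra_simps)
    qed
    then have "ennreal ((v x - v y)^2 * Wk k \<alpha> L x y) \<le> ennreal (2 * ((u x - u y)^2 * Wk k \<alpha> L x y) + 2 * ((w x - w y)^2 * Wk k \<alpha> L x y))"
      by (rule ennreal_leI)
    also have "\<dots> = 2 * fA x y + 2 * fB x y"
      using W0 by (simp add: fA_def fB_def ennreal_plus ennreal_mult)
    finally show ?thesis .
  qed
  have "E0 k \<alpha> L v \<le> (\<integral>\<^sup>+x. (\<integral>\<^sup>+y. 2 * fA x y + 2 * fB x y \<partial>lborel) \<partial>lborel)"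
    unfolding E0_def by (intro nn_integral_mono pw)
  also have "\<dots> = (\<integral>\<^sup>+x. 2 * (\<integral>\<^sup>+y. fA x y \<partial>lborel) + 2 * (\<integral>\<^sup>+y. fB x y \<partial>lborel) \<partial>lborel)"
    by (intro nn_integral_cong) (simp add: nn_integral_add nn_integral_cmult)
  also have "\<dots> = 2 * (\<integral>\<^sup>+x. (\<integral>\<^sup>+y. fA x y \<partial>lborel) \<partial>lborel) + 2 * (\<integral>\<^sup>+x. (\<integral>\<^sup>+y. fB x y \<partial>lborel) \<partial>lborel)"
    by (simp add: nn_integral_add nn_integral_cmult)
  finally show ?thesis by (simp add: E0_def fA_def fB_def w_def)
qed

lemma Cc_facts:
  fixes \<phi> :: "real^'n::finite \<Rightarrow> real"
  assumes phi: "\<phi> \<in> Cc_inf_half k" and a0: "0 < \<alpha>"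
  shows "\<phi> \<in> borel_measurable borel" "Hf k \<alpha> \<phi> < \<infinity>"
proof -
  define S where "S = closure {x. \<phi> x \<noteq> 0}"
  have sm: "smooth \<phi>" and cS: "compact S" and SH: "S \<subseteq> halfspace k"
    using phi by (auto simp: Cc_inf_half_def S_def)
  have cont: "continuous_on UNIV \<phi>" using sm by (simp add: smooth_def) (metis Ck.simps(1))
  then show bm: "\<phi> \<in> borel_measurable borel" by (rule borel_measurable_continuous_onI)
  have zero: "\<phi> x = 0" if "x \<notin> S" for x using that closure_subset[of "{x. \<phi> x \<noteq> 0}"] by (auto simp: S_def)
  show "Hf k \<alpha> \<phi> < \<infinity>"
  proof (cases "S = {}")
    case True
    then have "\<phi> = (\<lambda>x. 0)" using zero by auto
    then show ?thesis by (simp add: Hf_def)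
  next
    case False
    obtain x0 where x0: "x0 \<in> S" and x0min: "\<And>y. y \<in> S \<Longrightarrow> x0$k \<le> y$k"
    proof -
      have "continuous_on S (\<lambda>x. x$k)" by (intro continuous_intros)
      then show ?thesis using continuous_attains_inf[OF cS False, of "\<lambda>x. x$k"] that by auto
    qed
    define d0 where "d0 = x0$k"
    have d0: "0 < d0" using x0 SH by (auto simp: d0_def halfspace_def)
    have "bounded (\<phi> ` S)"
      using compact_continuous_image[OF continuous_on_subset[OF cont] cS] compact_imp_bounded by auto
    then obtain M where M: "\<And>x. x \<in> S \<Longrightarrow> \<bar>\<phi> x\<bar> \<le> M" by (auto simp: bounded_real)
    have Sb: "S \<in> sets borel" using cS by (simp add: compact_imp_closed)
    have pw: "ennreal ((\<phi> x)^2 / (x$k) powr \<alpha>) * indicator (halfspace k) x \<le> ennreal (M^2 / d0 powr \<alpha>) * indicator S x" for x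
    proof (cases "x \<in> S")
      case True
      have xk: "d0 \<le> x$k" using x0min[OF True] by (simp add: d0_def)
      have "(\<phi> x)^2 \<le> M^2" using M[OF True] by (metis abs_le_square_iff abs_of_nonneg abs_ge_zero order_trans)
      moreover have "d0 powr \<alpha> \<le> (x$k) powr \<alpha>" using xk d0 a0 by (intro powr_mono2) auto
      ultimately have "(\<phi> x)^2 / (x$k) powr \<alpha> \<le> M^2 / d0 powr \<alpha>"
        using d0 by (intro frac_le) auto
      then show ?thesis using True by (simp add: ennreal_leI split: split_indicator)
    qed (simp add: zero)
    have "Hf k \<alpha> \<phi> \<le> (\<integral>\<^sup>+x. ennreal (M^2 / d0 powr \<alpha>) * indicator S x \<partial>lborel)"
      unfolding Hf_def by (intro nn_integral_mono pw)
    also have "\<dots> = ennreal (M^2 / d0 powr \<alpha>) * emeasure lborel S"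
      using Sb by (simp add: nn_integral_cmult_indicator)
    also have "\<dots> < \<infinity>"
      using emeasure_bounded_finite[OF compact_imp_bounded[OF cS]] by (simp add: ennreal_mult_less_top)
    finally show ?thesis .
  qed
qed



lemma sup_pointwise:
  fixes f :: "real^'n::finite \<Rightarrow> ennreal"
  shows "(SUP n. f x * indicator {x. 1 / real (Suc n) < x$k} x) = f x * indicator (halfspace k) x"
proof (cases "0 < x$k")
  case True
  obtain N where N: "inverse (real (Suc N)) < x$k" using reals_Archimedean[OF True] by blast
  show ?thesis
  proof (rule antisym)
    show "(SUP n. f x * indicator {x. 1 / real (Suc n) < x$k} x) \<le> f x * indicator (halfspace k) x"
      using True by (intro SUP_least) (auto simp: halfspace_def split: split_indicator)
    show "f x * indicator (halfspace k) x \<le> (SUP n. f x * indicator {x. 1 / real (Suc n) < x$k} x)"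
      using True N by (intro SUP_upper2[where i=N]) (auto simp: halfspace_def inverse_eq_divide split: split_indicator)
  qed
next
  case False
  have "\<not> 1 / real (Suc n) < x$k" for n
    using False by (smt (verit) of_nat_0_le_iff divide_pos_pos of_nat_Suc)
  then have "indicator {x. 1 / real (Suc n) < x$k} x = (0::ennreal)" for n by simp
  then show ?thesis using False by (simp add: halfspace_def)
qed

lemma extend:
  fixes u :: "real^'n::finite \<Rightarrow> real" and B :: "real^'n \<Rightarrow> real^'n \<Rightarrow> real"
  assumes a0: "0 < \<alpha>" and K1: "0 \<le> K1" and K2: "0 \<le> K2"
    and coreH: "\<And>\<phi>. \<phi> \<in> Cc_inf_half k \<Longrightarrow> Hf k \<alpha> \<phi> \<le> ennreal K2 * E0 k \<alpha> L \<phi>"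
    and E0E: "\<And>v. v \<in> borel_measurable borel \<Longrightarrow> E0 k \<alpha> L v \<le> ennreal K1 * Eform k \<alpha> B v"
    and u: "u \<in> Fdom k \<alpha> B"
  shows "Hf k \<alpha> u \<le> ennreal (4*K2) * E0 k \<alpha> L u"
proof -
  obtain \<phi> where phi: "\<And>j. \<phi> j \<in> Cc_inf_half k"
    and lim: "(\<lambda>j. E1form k \<alpha> B (\<lambda>x. u x - \<phi> j x)) \<longlonglongrightarrow> 0"
    and um: "u \<in> borel_measurable lborel"
    using u by (auto simp: Fdom_def)
  have u_m[measurable]: "u \<in> borel_measurable borel" using um by simp
  have phim[measurable]: "\<phi> j \<in> borel_measurable borel" for j
    using Cc_facts(1)[OF phi a0] .
  define Hd where "Hd \<delta> v = (\<integral>\<^sup>+x. ennreal ((v x)^2 / (x$k) powr \<alpha>) * indicator {x. \<delta> < x$k} x \<partial>lborel)"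
    for \<delta> and v :: "real^'n \<Rightarrow> real"
  have Hdle: "Hd \<delta> u \<le> ennreal (4*K2) * E0 k \<alpha> L u" if d: "0 < \<delta>" for \<delta>
  proof -
    define c2 where "c2 = 4*K2*K1 + 2 * (1 / \<delta> powr \<alpha>)"
    have c20: "0 \<le> c2" using K1 K2 by (simp add: c2_def)
    have bound: "Hd \<delta> u \<le> ennreal (4*K2) * E0 k \<alpha> L u + ennreal c2 * E1form k \<alpha> B (\<lambda>x. u x - \<phi> j x)" for j
    proof -
      define w where "w x = u x - \<phi> j x" for x
      have wm[measurable]: "w \<in> borel_measurable borel" unfolding w_def by measurable
      have Sm: "{x::real^'n. \<delta> < x$k} \<in> sets borel" by measurable
      define F where "F = E1form k \<alpha> B w"
      have s1: "Hd \<delta> u \<le> 2 * Hd \<delta> (\<phi> j) + 2 * Hd \<delta> w"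
      proof -
        have "Hd \<delta> u \<le> (\<integral>\<^sup>+x. 2 * (ennreal (((\<phi> j) x)^2 / (x$k) powr \<alpha>) * indicator {x. \<delta> < x$k} x)
             + 2 * (ennreal ((w x)^2 / (x$k) powr \<alpha>) * indicator {x. \<delta> < x$k} x) \<partial>lborel)"
          unfolding Hd_def
        proof (intro nn_integral_mono)
          fix x :: "real^'n"
          show "ennreal ((u x)^2 / (x$k) powr \<alpha>) * indicator {x. \<delta> < x$k} x
             \<le> 2 * (ennreal (((\<phi> j) x)^2 / (x$k) powr \<alpha>) * indicator {x. \<delta> < x$k} x)
             + 2 * (ennreal ((w x)^2 / (x$k) powr \<alpha>) * indicator {x. \<delta> < x$k} x)"
          proof (cases "\<delta> < x$k")
            case True
            then have xk: "0 < x$k" using d by simp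
            have "(u x)^2 \<le> (1+1) * (\<phi> j x)^2 + (1 + 1/1) * (u x - \<phi> j x)^2"
              by (rule sq_split) simp
            then have "(u x)^2 / (x$k) powr \<alpha> \<le> (2 * (\<phi> j x)^2 + 2 * (w x)^2) / (x$k) powr \<alpha>"
              using xk by (intro divide_right_mono) (auto simp: w_def)
            also have "\<dots> = 2 * ((\<phi> j x)^2 / (x$k) powr \<alpha>) + 2 * ((w x)^2 / (x$k) powr \<alpha>)"
              by (simp add: add_divide_distrib)
            finally have "ennreal ((u x)^2 / (x$k) powr \<alpha>) \<le> ennreal (2 * ((\<phi> j x)^2 / (x$k) powr \<alpha>) + 2 * ((w x)^2 / (x$k) powr \<alpha>))"
              by (rule ennreal_leI)
            also have "\<dots> = 2 * ennreal ((\<phi> j x)^2 / (x$k) powr \<alpha>) + 2 * ennreal ((w x)^2 / (x$k) powr \<alpha>)"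
            proof -
              have gen: "ennreal (2*A + 2*B) = 2 * ennreal A + 2 * ennreal B" if "0 \<le> A" "0 \<le> B" for A B :: real
              proof -
                have "ennreal (2*A + 2*B) = ennreal (2*A) + ennreal (2*B)" using that by (intro ennreal_plus) auto
                also have "\<dots> = 2 * ennreal A + 2 * ennreal B" using ennreal_mult[of 2 A] ennreal_mult[of 2 B] that by simp
                finally show ?thesis .
              qed
              show ?thesis by (rule gen) auto
            qed
            finally show ?thesis using True by simp
          qed simp
        qed
        also have "\<dots> = 2 * Hd \<delta> (\<phi> j) + 2 * Hd \<delta> w"
          unfolding Hd_def using Sm by (simp add: nn_integral_add nn_integral_cmult)
        finally show ?thesis .
      qed
      have s2: "Hd \<delta> (\<phi> j) \<le> Hf k \<alpha> (\<phi> j)"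
        unfolding Hd_def Hf_def using d
        by (intro nn_integral_mono) (auto simp: halfspace_def split: split_indicator)
      have s3: "Hd \<delta> w \<le> ennreal (1 / \<delta> powr \<alpha>) * F"
      proof -
        have "Hd \<delta> w \<le> (\<integral>\<^sup>+x. ennreal (1 / \<delta> powr \<alpha>) * (ennreal ((w x)^2) * indicator (halfspace k) x) \<partial>lborel)"
          unfolding Hd_def
        proof (intro nn_integral_mono)
          fix x :: "real^'n"
          show "ennreal ((w x)^2 / (x$k) powr \<alpha>) * indicator {x. \<delta> < x$k} x
              \<le> ennreal (1 / \<delta> powr \<alpha>) * (ennreal ((w x)^2) * indicator (halfspace k) x)"
          proof (cases "\<delta> < x$k")
            case True
            have "\<delta> powr \<alpha> \<le> (x$k) powr \<alpha>" using True d a0 by (intro powr_mono2) auto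
            then have "(w x)^2 / (x$k) powr \<alpha> \<le> (w x)^2 / \<delta> powr \<alpha>"
              using d True by (intro divide_left_mono) (auto intro: mult_pos_pos)
            then have "(w x)^2 / (x$k) powr \<alpha> \<le> 1 / \<delta> powr \<alpha> * (w x)^2" by simp
            then have "ennreal ((w x)^2 / (x$k) powr \<alpha>) \<le> ennreal (1 / \<delta> powr \<alpha> * (w x)^2)"
              by (rule ennreal_leI)
            also have "\<dots> = ennreal (1 / \<delta> powr \<alpha>) * ennreal ((w x)^2)" by (rule ennreal_mult) auto
            finally show ?thesis using True d by (simp add: halfspace_def)
          qed simp
        qed
        also have "\<dots> = ennreal (1 / \<delta> powr \<alpha>) * (\<integral>\<^sup>+x. ennreal ((w x)^2) * indicator (halfspace k) x \<partial>lborel)"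
          by (rule nn_integral_cmult) (simp add: halfspace_def)
        also have "\<dots> \<le> ennreal (1 / \<delta> powr \<alpha>) * F"
          unfolding F_def E1form_def by (intro mult_left_mono) auto
        finally show ?thesis .
      qed
      have s4: "Hf k \<alpha> (\<phi> j) \<le> ennreal K2 * (2 * E0 k \<alpha> L u + 2 * (ennreal K1 * F))"
      proof -
        have "Hf k \<alpha> (\<phi> j) \<le> ennreal K2 * E0 k \<alpha> L (\<phi> j)" by (rule coreH[OF phi])
        also have "E0 k \<alpha> L (\<phi> j) \<le> 2 * E0 k \<alpha> L u + 2 * E0 k \<alpha> L w"
        proof -
          have "w = (\<lambda>x. u x - \<phi> j x)" by (rule ext) (simp add: w_def)
          then show ?thesis using E0_sub[OF u_m phim[of j], of k \<alpha> L] by simp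
        qed
        also have "E0 k \<alpha> L w \<le> ennreal K1 * Eform k \<alpha> B w" by (rule E0E[OF wm])
        also have "Eform k \<alpha> B w \<le> F" by (simp add: F_def E1form_def)
        finally show ?thesis by (simp add: mult_left_mono add_left_mono)
      qed
      have "Hd \<delta> u \<le> 2 * (ennreal K2 * (2 * E0 k \<alpha> L u + 2 * (ennreal K1 * F))) + 2 * (ennreal (1 / \<delta> powr \<alpha>) * F)"
        using s1 s2 s3 s4 by (meson add_mono mult_left_mono order_trans zero_le)
      also have "\<dots> = ennreal (4*K2) * E0 k \<alpha> L u + ennreal c2 * F"
      proof -
        have e1: "ennreal (4*K2) = 4 * ennreal K2" using K2 by (simp add: ennreal_mult)
        have e2: "ennreal c2 = 4 * ennreal K2 * ennreal K1 + 2 * ennreal (1 / \<delta> powr \<alpha>)"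
        proof -
          have "ennreal c2 = ennreal (4*K2*K1) + ennreal (2 * (1 / \<delta> powr \<alpha>))"
            unfolding c2_def using K1 K2 by (intro ennreal_plus) auto
          also have "ennreal (4*K2*K1) = 4 * ennreal K2 * ennreal K1"
            using K1 K2 ennreal_mult[of "4*K2" K1] ennreal_mult[of 4 K2] by simp
          also have "ennreal (2 * (1 / \<delta> powr \<alpha>)) = 2 * ennreal (1 / \<delta> powr \<alpha>)"
            using ennreal_mult[of 2 "1 / \<delta> powr \<alpha>"] by simp
          finally show ?thesis .
        qed
        show ?thesis unfolding e1 e2 by (simp add: algebra_simps)
      qed
      moreover have "w = (\<lambda>x. u x - \<phi> j x)" by (rule ext) (simp add: w_def)
      ultimately show ?thesis by (simp add: F_def)
    qed
    have "(\<lambda>j. ennreal (4*K2) * E0 k \<alpha> L u + ennreal c2 * E1form k \<alpha> B (\<lambda>x. u x - \<phi> j x))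
        \<longlonglongrightarrow> ennreal (4*K2) * E0 k \<alpha> L u + ennreal c2 * 0"
      by (intro tendsto_add tendsto_const ennreal_tendsto_cmult lim) simp
    then show ?thesis using bound by (intro LIMSEQ_le_const) auto
  qed
  have inc: "incseq (\<lambda>n x. ennreal ((u x)^2 / (x$k) powr \<alpha>) * indicator {x. 1 / real (Suc n) < x$k} x)"
    by (intro incseq_SucI le_funI mult_left_mono)
       (auto split: split_indicator simp: frac_le order_le_less_trans[rotated])
  have "Hf k \<alpha> u = (\<integral>\<^sup>+x. (SUP n. ennreal ((u x)^2 / (x$k) powr \<alpha>) * indicator {x. 1 / real (Suc n) < x$k} x) \<partial>lborel)"
    unfolding Hf_def by (rule nn_integral_cong, rule sup_pointwise[symmetric])
  also have "\<dots> = (SUP n. Hd (1 / real (Suc n)) u)"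
    unfolding Hd_def by (rule nn_integral_monotone_convergence_SUP[OF inc]) measurable
  also have "\<dots> \<le> ennreal (4*K2) * E0 k \<alpha> L u"
    by (intro SUP_least Hdle) simp
  finally show ?thesis .
qed


theorem proposition3p2:
  fixes k :: "'n::finite" and \<alpha> \<beta>1 \<beta>2 \<beta>3 \<beta>4 :: real
    and B :: "real ^ 'n \<Rightarrow> real ^ 'n \<Rightarrow> real"
  assumes alpha: "0 < \<alpha>" "\<alpha> < 2" "\<alpha> \<noteq> 1"
    and betas: "\<beta>1 \<ge> 0" "\<beta>2 \<ge> 0" "\<beta>3 \<ge> 0" "\<beta>4 \<ge> 0"
    and b13: "\<beta>3 > 0 \<Longrightarrow> \<beta>1 > 0" and b24: "\<beta>4 > 0 \<Longrightarrow> \<beta>2 > 0"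
    and Bnonneg: "\<And>x y. x \<in> halfspace k \<Longrightarrow> y \<in> halfspace k \<Longrightarrow> B x y \<ge> 0"
    and A1: "\<And>x y. x \<in> halfspace k \<Longrightarrow> y \<in> halfspace k \<Longrightarrow> B x y = B y x"
    and A2: "\<alpha> \<ge> 1 \<Longrightarrow> \<exists>\<theta> C. \<theta> > \<alpha> - 1 \<and> C > 0 \<and>
               (\<forall>x\<in>halfspace k. \<forall>y\<in>halfspace k.
                  \<bar>B x x - B x y\<bar> \<le> C * (dist x y / min (x $ k) (y $ k)) powr \<theta>)"
    and A3: "\<exists>C\<ge>1. \<forall>x\<in>halfspace k. \<forall>y\<in>halfspace k. x \<noteq> y \<longrightarrow>
               Btilde k \<beta>1 \<beta>2 \<beta>3 \<beta>4 x y / C \<le> B x y \<and> B x y \<le> C * Btilde k \<beta>1 \<beta>2 \<beta>3 \<beta>4 x y"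
    and A4_scale: "\<And>a x y. a > 0 \<Longrightarrow> x \<in> halfspace k \<Longrightarrow> y \<in> halfspace k \<Longrightarrow>
               B (a *\<^sub>R x) (a *\<^sub>R y) = B x y"
    and A4_transl: "\<And>z x y. z $ k = 0 \<Longrightarrow> x \<in> halfspace k \<Longrightarrow> y \<in> halfspace k \<Longrightarrow>
               B (x + z) (y + z) = B x y"
    and Bdiag: "\<And>x. x \<in> halfspace k \<Longrightarrow> B x x = 1"
  shows "\<exists>C>0. \<forall>u\<in>Fdom k \<alpha> B.
           Eform k \<alpha> B u \<ge> ennreal C *
             (\<integral>\<^sup>+ x. ennreal ((u x)^2 / (x $ k) powr \<alpha>) * indicator (halfspace k) x \<partial>lborel)"
proof -
  obtain C where C1: "C \<ge> 1" and Cb: "\<forall>x\<in>halfspace k. \<forall>y\<in>halfspace k. x \<noteq> y \<longrightarrow>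
               Btilde k \<beta>1 \<beta>2 \<beta>3 \<beta>4 x y / C \<le> B x y \<and> B x y \<le> C * Btilde k \<beta>1 \<beta>2 \<beta>3 \<beta>4 x y"
    using A3 by blast
  have C0: "0 < C" using C1 by simp
  define D where "D = real CARD('n)"
  have D1: "1 \<le> D" by (simp add: D_def Suc_le_eq)
  define L where "L = 6*D"
  have L1: "1 \<le> L" using D1 by (simp add: L_def)
  define c0 where "c0 = (1/L) powr \<beta>1 * (1/L) powr \<beta>2 * (ln 2) powr \<beta>3 * (ln 2) powr \<beta>4"
  have c0pos: "0 < c0" using L1 by (simp add: c0_def)
  have Blow: "c0 / C \<le> B x y" if "0 < x$k" "0 < y$k" "x \<noteq> y" "dist x y \<le> L * min (x$k) (y$k)" for x y
  proof -
    have "c0 \<le> Btilde k \<beta>1 \<beta>2 \<beta>3 \<beta>4 x y"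
      unfolding c0_def by (rule Btilde_lower[OF that L1 betas])
    then have "c0 / C \<le> Btilde k \<beta>1 \<beta>2 \<beta>3 \<beta>4 x y / C" using C0 by (simp add: divide_right_mono)
    also have "\<dots> \<le> B x y" using Cb that by (auto simp: halfspace_def)
    finally show ?thesis .
  qed
  define K1 where "K1 = 2*C/c0"
  have K1pos: "0 \<le> K1" using C0 c0pos by (simp add: K1_def)
  have E0E: "E0 k \<alpha> L v \<le> ennreal K1 * Eform k \<alpha> B v" if "v \<in> borel_measurable borel" for v
    unfolding K1_def by (rule E0_le_Eform[OF that c0pos C0 Blow])
  obtain a b q \<epsilon> where ab: "1/3 \<le> a" "a < b" "b \<le> 3" "b \<le> 1 \<or> 1 \<le> a"
    and q: "\<And>s. a < s \<Longrightarrow> s < b \<Longrightarrow> s powr (\<alpha>-1) \<le> q" and q0: "0 \<le> q"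
    and e: "0 < \<epsilon>" "(1+\<epsilon>)*q < 1"
  proof -
    obtain q where q0: "0 \<le> q" and q1: "q < 1" and ex: "\<exists>a b. 1/3 \<le> a \<and> a < b \<and> b \<le> 3 \<and> (b \<le> 1 \<or> 1 \<le> a) \<and>
        (\<forall>s. a < s \<longrightarrow> s < b \<longrightarrow> s powr (\<alpha>-1) \<le> q)"
    proof (cases "\<alpha> < 1")
      case True
      have "2 powr (\<alpha>-1) < 1" using True by (intro powr_less_one) auto
      moreover have "s powr (\<alpha>-1) \<le> 2 powr (\<alpha>-1)" if "2 < s" for s
        using True that by (intro powr_mono2') auto
      ultimately have "\<exists>a b. 1/3 \<le> a \<and> a < b \<and> b \<le> 3 \<and> (b \<le> 1 \<or> 1 \<le> a) \<and>
        (\<forall>s. a < s \<longrightarrow> s < b \<longrightarrow> s powr (\<alpha>-1) \<le> 2 powr (\<alpha>-1))"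
        by (intro exI[of _ 2] exI[of _ 3]) auto
      then show ?thesis using \<open>2 powr (\<alpha>-1) < 1\<close> by (intro that[of "2 powr (\<alpha>-1)"]) auto
    next
      case False
      then have a1: "1 < \<alpha>" using alpha by simp
      have eq: "(1/2::real) powr (\<alpha>-1) = 1 / 2 powr (\<alpha>-1)" by (simp add: powr_divide)
      have "1 < 2 powr (\<alpha>-1)" using a1 by simp
      then have "(1/2::real) powr (\<alpha>-1) < 1" unfolding eq by simp
      moreover have "s powr (\<alpha>-1) \<le> (1/2) powr (\<alpha>-1)" if "0 < s" "s < 1/2" for s
        using a1 that by (intro powr_mono2) auto
      moreover have "0 \<le> (1/2::real) powr (\<alpha>-1)" by simp
      moreover have "\<exists>a b. 1/3 \<le> a \<and> a < b \<and> b \<le> 3 \<and> (b \<le> 1 \<or> 1 \<le> a) \<and>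
        (\<forall>s. a < s \<longrightarrow> s < b \<longrightarrow> s powr (\<alpha>-1) \<le> (1/2) powr (\<alpha>-1))"
        using calculation(2) by (intro exI[of _ "1/3"] exI[of _ "1/2"]) auto
      ultimately show ?thesis by (intro that[of "(1/2) powr (\<alpha>-1)"]) auto
    qed
    then obtain a b where ab: "1/3 \<le> a" "a < b" "b \<le> 3" "b \<le> 1 \<or> 1 \<le> a"
      and qq: "\<And>s. a < s \<Longrightarrow> s < b \<Longrightarrow> s powr (\<alpha>-1) \<le> q" by blast
    define \<epsilon> where "\<epsilon> = (1-q)/2"
    have e0: "0 < \<epsilon>" using q1 by (simp add: \<epsilon>_def)
    have "0 < (1-q)*(2-q)" using q1 by (intro mult_pos_pos) auto
    then have e1: "(1+\<epsilon>)*q < 1" by (simp add: \<epsilon>_def field_simps algebra_simps power2_eq_square)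
    show ?thesis by (rule that[OF ab qq q0 e0 e1])
  qed
  define K2 where "K2 = (1+1/\<epsilon>) * (2 powr real CARD('n) * (2*real CARD('n)) powr (real CARD('n)+\<alpha>))
            / ((1-(1+\<epsilon>)*q) * (\<Prod>i\<in>UNIV. if i = k then b - a else 2))"
  have V0: "0 < (\<Prod>i\<in>(UNIV::'n set). if i = k then b - a else 2)" using ab by (intro Zb_vol_pos) auto
  have K2pos: "0 \<le> K2" unfolding K2_def using e V0 by (intro divide_nonneg_pos mult_nonneg_nonneg) auto
  have coreH: "Hf k \<alpha> \<phi> \<le> ennreal K2 * E0 k \<alpha> L \<phi>" if phi: "\<phi> \<in> Cc_inf_half k" for \<phi>
    unfolding K2_def L_def D_def
    by (rule core[OF Cc_facts(1)[OF phi alpha(1)] alpha(1) ab q q0 e Cc_facts(2)[OF phi alpha(1)]])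
  define Cst where "Cst = 1 / (4*K2*K1 + 1)"
  have KK: "0 \<le> 4*K2*K1" using K1pos K2pos by simp
  have KK1: "0 < 4*K2*K1 + 1" using KK by linarith
  have Cst0: "0 < Cst" using KK1 by (simp add: Cst_def)
  show ?thesis
  proof (intro exI[of _ Cst] conjI ballI Cst0)
    fix u assume u: "u \<in> Fdom k \<alpha> B"
    have um: "u \<in> borel_measurable borel" using u by (simp add: Fdom_def)
    have "Hf k \<alpha> u \<le> ennreal (4*K2) * E0 k \<alpha> L u"
      by (rule extend[OF alpha(1) K1pos K2pos coreH E0E u])
    also have "\<dots> \<le> ennreal (4*K2) * (ennreal K1 * Eform k \<alpha> B u)"
      by (intro mult_left_mono E0E[OF um]) simp
    finally have H: "Hf k \<alpha> u \<le> ennreal (4*K2) * (ennreal K1 * Eform k \<alpha> B u)" .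
    have "ennreal Cst * Hf k \<alpha> u \<le> ennreal Cst * (ennreal (4*K2) * (ennreal K1 * Eform k \<alpha> B u))"
      using H by (rule mult_left_mono) simp
    also have "\<dots> = ennreal (Cst * (4*K2) * K1) * Eform k \<alpha> B u"
      using Cst0 K1pos K2pos by (simp add: ennreal_mult mult.assoc)
    also have "\<dots> \<le> 1 * Eform k \<alpha> B u"
    proof (intro mult_right_mono)
      have "Cst * (4*K2) * K1 = (4*K2*K1) / (4*K2*K1 + 1)" by (simp add: Cst_def)
      also have "\<dots> \<le> 1" using KK KK1 by (simp add: divide_le_eq_1)
      finally show "ennreal (Cst * (4*K2) * K1) \<le> 1" by (simp add: ennreal_le_1)
    qed simp
    finally show "ennreal Cst * (\<integral>\<^sup>+ x. ennreal ((u x)^2 / (x $ k) powr \<alpha>) * indicator (halfspace k) x \<partial>lborel)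
        \<le> Eform k \<alpha> B u" by (simp add: Hf_def)
  qed
qed


end
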